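(* For all $p\in(0,1)$ and $n\ge0$, $\mathbb P_p[o\rightsquigarrow\partial B_n]=\mathbb P'_p[o\leftrightsquigarrow\partial B_n]$.
   Context: $\mathbb P_p$ is directed Bernoulli bond percolation on $\mathbb Z^d$: each directed nearest-neighbor edge $(u,v)$ ($\|u-v\|_1=1$) is open independently with probability $p$; $\{o\rightsquigarrow\partial B_n\}$ is the event that there is a path of open directed edges from the origin $o$ to a vertex of $\partial B_n$. $\mathbb P'_p$ is ordinary (undirected) Bernoulli bond percolation on the nearest-neighbor edges of $\mathbb Z^d$ with parameter $p$, and $\{o\leftrightsquigarrow\partial B_n\}$ is the event that some vertex of $\partial B_n$ is joined to $o$ by a path of open edges. Here $B_n=\{x:\|x\|_1\le n\}$, $\partial B_n=B_{n+1}\setminus B_n$. *)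

theory Defs
  imports "HOL-Probability.Probability"
begin

text \<open>Vertices of Z^d are functions 'd \<Rightarrow> int with 'd a finite index type (d = CARD('d)).\<close>

definition l1norm :: "('d::finite \<Rightarrow> int) \<Rightarrow> int" where
  "l1norm x = (\<Sum>i\<in>UNIV. \<bar>x i\<bar>)"

definition adj :: "('d::finite \<Rightarrow> int) \<Rightarrow> ('d \<Rightarrow> int) \<Rightarrow> bool" where
  "adj u v \<longleftrightarrow> l1norm (\<lambda>i. u i - v i) = 1"

definition origin :: "'d::finite \<Rightarrow> int" where
  "origin = (\<lambda>_. 0)"

definition ball_l1 :: "nat \<Rightarrow> ('d::finite \<Rightarrow> int) set" where
  "ball_l1 n = {x. l1norm x \<le> int n}"

definition bdry :: "nat \<Rightarrow> ('d::finite \<Rightarrow> int) set" where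
  "bdry n = ball_l1 (Suc n) - ball_l1 n"

definition dir_edges :: "(('d::finite \<Rightarrow> int) \<times> ('d \<Rightarrow> int)) set" where
  "dir_edges = {(u, v). adj u v}"

definition undir_edges :: "('d::finite \<Rightarrow> int) set set" where
  "undir_edges = {{u, v} | u v. adj u v}"

definition dir_perc :: "real \<Rightarrow> ((('d::finite \<Rightarrow> int) \<times> ('d \<Rightarrow> int)) \<Rightarrow> bool) measure" where
  "dir_perc p = PiM dir_edges (\<lambda>_. measure_pmf (bernoulli_pmf p))"

definition undir_perc :: "real \<Rightarrow> (('d::finite \<Rightarrow> int) set \<Rightarrow> bool) measure" where
  "undir_perc p = PiM undir_edges (\<lambda>_. measure_pmf (bernoulli_pmf p))"

definition dir_reach_event :: "nat \<Rightarrow> ((('d::finite \<Rightarrow> int) \<times> ('d \<Rightarrow> int)) \<Rightarrow> bool) set" where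
  "dir_reach_event n = {\<omega>. \<exists>x\<in>bdry n. (\<lambda>u v. adj u v \<and> \<omega> (u, v))\<^sup>*\<^sup>* origin x}"

definition undir_reach_event :: "nat \<Rightarrow> (('d::finite \<Rightarrow> int) set \<Rightarrow> bool) set" where
  "undir_reach_event n = {\<omega>. \<exists>x\<in>bdry n. (\<lambda>u v. adj u v \<and> \<omega> {u, v})\<^sup>*\<^sup>* origin x}"

end

theory Submission
  imports Defs
begin


definition wt :: "real \<Rightarrow> bool \<Rightarrow> real" where
  "wt p b = (if b then p else 1 - p)"

definition W :: "real \<Rightarrow> 'i set \<Rightarrow> ('i \<Rightarrow> bool) \<Rightarrow> real" where
  "W p A \<omega> = (\<Prod>i\<in>A. wt p (\<omega> i))"

definition Ind :: "'a \<Rightarrow> 'a set \<Rightarrow> ('a \<times> 'a) set \<Rightarrow> real" where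
  "Ind s T R = of_bool (\<exists>x\<in>T. (s, x) \<in> R\<^sup>*)"

lemma ind_swap:
  "Ind s T (insert (u,v) R) + Ind s T (insert (v,u) R) = Ind s T (insert (u,v) (insert (v,u) R)) + Ind s T R"
proof -
  have A: "(insert (v,u) R)\<^sup>* = R\<^sup>* \<union> {(x, y). (x, v) \<in> R\<^sup>* \<and> (u, y) \<in> R\<^sup>*}"
    by (rule rtrancl_insert)
  have B: "(insert (u,v) R)\<^sup>* = R\<^sup>* \<union> {(x, y). (x, u) \<in> R\<^sup>* \<and> (v, y) \<in> R\<^sup>*}"
    by (rule rtrancl_insert)
  have C: "(insert (u,v) (insert (v,u) R))\<^sup>* = (insert (v,u) R)\<^sup>* \<union> {(x, y). (x, u) \<in> (insert (v,u) R)\<^sup>* \<and> (v, y) \<in> (insert (v,u) R)\<^sup>*}"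
    by (rule rtrancl_insert)
  show ?thesis
  proof (cases "(s,u) \<in> R\<^sup>*")
    case ou: True
    show ?thesis
    proof (cases "(s,v) \<in> R\<^sup>*")
      case True
      then show ?thesis using ou unfolding Ind_def A B C
        by (auto intro: rtrancl_trans)
    next
      case False
      then show ?thesis using ou unfolding Ind_def A B C
        by (auto intro: rtrancl_trans)
    qed
  next
    case nou: False
    show ?thesis
    proof (cases "(s,v) \<in> R\<^sup>*")
      case True
      then show ?thesis using nou unfolding Ind_def A B C
        by (auto intro: rtrancl_trans)
    next
      case False
      then show ?thesis using nou unfolding Ind_def A B C
        by (auto intro: rtrancl_trans)
    qed
  qed
qed

lemma sum_PiE_insert:
  assumes "a \<notin> A"
  shows "(\<Sum>x\<in>PiE (insert a A) B. f x) = (\<Sum>y\<in>B a. \<Sum>g\<in>PiE A B. f (g(a:=y)))"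
proof -
  have "(\<Sum>x\<in>PiE (insert a A) B. f x) = (\<Sum>x\<in>(\<lambda>(y, g). g(a := y)) ` (B a \<times> PiE A B). f x)"
    by (simp add: PiE_insert_eq)
  also have "\<dots> = (\<Sum>z\<in>B a \<times> PiE A B. f ((\<lambda>(y, g). g(a := y)) z))"
    by (rule sum.reindex[OF inj_combinator[OF assms], unfolded comp_def])
  also have "\<dots> = (\<Sum>y\<in>B a. \<Sum>g\<in>PiE A B. f (g(a:=y)))"
    by (simp add: sum.cartesian_product split_def)
  finally show ?thesis .
qed

lemma W_upd:
  assumes "finite A" "a \<notin> A"
  shows "W p (insert a A) (g(a:=y)) = wt p y * W p A g"
proof -
  have "W p A (g(a:=y)) = W p A g" unfolding W_def
    using assms by (intro prod.cong) auto
  then show ?thesis using assms unfolding W_def by simp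
qed

definition Fset :: "'a set set \<Rightarrow> ('a \<times> 'a) set" where
  "Fset G = {(u,v). u \<noteq> v \<and> {u,v} \<in> G}"

definition Su :: "'a set set \<Rightarrow> ('a set \<Rightarrow> bool) \<Rightarrow> ('a \<times> 'a) set" where
  "Su G \<eta> = {(u,v). u \<noteq> v \<and> {u,v} \<in> G \<and> \<eta> {u,v}}"

definition Dir where
  "Dir p s T G R = (\<Sum>\<omega>\<in>PiE (Fset G) (\<lambda>_. UNIV). W p (Fset G) \<omega> * Ind s T (R \<union> {d. d \<in> Fset G \<and> \<omega> d}))"

definition Und where
  "Und p s T G R = (\<Sum>\<eta>\<in>PiE G (\<lambda>_. UNIV). W p G \<eta> * Ind s T (R \<union> Su G \<eta>))"

lemma finite_Fset: "finite G \<Longrightarrow> \<forall>e\<in>G. card e = 2 \<Longrightarrow> finite (Fset (G :: 'a set set))"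
proof -
  assume a: "finite G" "\<forall>e\<in>G. card e = 2"
  have "Fset G \<subseteq> (\<Union>G) \<times> (\<Union>G)" unfolding Fset_def by auto
  moreover have "finite (\<Union>G)" using a by (metis card.infinite finite_Union zero_neq_numeral)
  ultimately show ?thesis by (meson finite_SigmaI finite_subset)
qed

lemma Und_swap:
  "Und p s T G (insert (u,v) R) + Und p s T G (insert (v,u) R) = Und p s T G (insert (u,v) (insert (v,u) R)) + Und p s T G R"
  unfolding Und_def sum.distrib[symmetric] distrib_left[symmetric]
  using ind_swap[of s T u v "R \<union> Su G _"] by simp

lemma core:
  assumes "finite G" "\<forall>e\<in>G. card e = 2"
  shows "Dir p s T G R = Und p s T G R"
  using assms
proof (induction G arbitrary: R rule: finite_induct)
  case empty
  then show ?case unfolding Dir_def Und_def Fset_def Su_def W_def by simp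
next
  case (insert e G)
  obtain u v where e: "e = {u,v}" "u \<noteq> v" using insert.prems by (auto simp: card_2_iff)
  have F: "Fset (insert e G) = insert (u,v) (insert (v,u) (Fset G))"
    unfolding Fset_def e using e(2) by (auto simp: doubleton_eq_iff)
  have nF: "(u,v) \<notin> insert (v,u) (Fset G)" "(v,u) \<notin> Fset G"
    using insert.hyps e unfolding Fset_def by (auto simp: insert_commute)
  have fin: "finite (Fset G)" using finite_Fset insert.hyps insert.prems by blast
  have "Dir p s T (insert e G) R = (\<Sum>a\<in>UNIV. \<Sum>b\<in>UNIV. wt p a * wt p b * Dir p s T G
          (R \<union> (if a then {(u,v)} else {}) \<union> (if b then {(v,u)} else {})))"
  proof -
    have "Dir p s T (insert e G) R = (\<Sum>a\<in>UNIV. \<Sum>b\<in>UNIV. \<Sum>g\<in>PiE (Fset G) (\<lambda>_. UNIV).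
       W p (insert (u,v) (insert (v,u) (Fset G))) (g((v,u):=b, (u,v):=a)) *
       Ind s T (R \<union> {d. d \<in> insert (u,v) (insert (v,u) (Fset G)) \<and> (g((v,u):=b, (u,v):=a)) d}))"
      unfolding Dir_def F sum_PiE_insert[OF nF(1)] sum_PiE_insert[OF nF(2)] by simp
    also have "\<dots> = (\<Sum>a\<in>UNIV. \<Sum>b\<in>UNIV. wt p a * wt p b * Dir p s T G
          (R \<union> (if a then {(u,v)} else {}) \<union> (if b then {(v,u)} else {})))"
      unfolding Dir_def sum_distrib_left
    proof (intro sum.cong refl)
      fix a b g assume g: "g \<in> PiE (Fset G) (\<lambda>_. UNIV :: bool set)"
      have w: "W p (insert (u,v) (insert (v,u) (Fset G))) (g((v,u):=b, (u,v):=a)) = wt p a * (wt p b * W p (Fset G) g)"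
        using W_upd[of "insert (v,u) (Fset G)" "(u,v)" p "g((v,u):=b)" a] W_upd[of "Fset G" "(v,u)" p g b] fin nF
        by simp
      have st: "R \<union> {d. d \<in> insert (u,v) (insert (v,u) (Fset G)) \<and> (g((v,u):=b, (u,v):=a)) d}
        = R \<union> (if a then {(u,v)} else {}) \<union> (if b then {(v,u)} else {}) \<union> {d. d \<in> Fset G \<and> g d}"
        using nF e(2) by auto
      show "W p (insert (u,v) (insert (v,u) (Fset G))) (g((v,u):=b, (u,v):=a)) *
       Ind s T (R \<union> {d. d \<in> insert (u,v) (insert (v,u) (Fset G)) \<and> (g((v,u):=b, (u,v):=a)) d}) =
        wt p a * wt p b * (W p (Fset G) g * Ind s T (R \<union> (if a then {(u,v)} else {}) \<union> (if b then {(v,u)} else {}) \<union> {d. d \<in> Fset G \<and> g d}))"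
        unfolding w st by simp
    qed
    finally show ?thesis .
  qed
  also have "\<dots> = (\<Sum>a\<in>UNIV. \<Sum>b\<in>UNIV. wt p a * wt p b * Und p s T G
          (R \<union> (if a then {(u,v)} else {}) \<union> (if b then {(v,u)} else {})))"
    using insert.IH insert.prems by simp
  also have "\<dots> = (\<Sum>c\<in>UNIV. wt p c * Und p s T G
          (R \<union> (if c then {(u,v),(v,u)} else {})))"
  proof -
    have s1: "R \<union> {(u,v)} \<union> {(v,u)} = insert (u,v) (insert (v,u) R)" by auto
    have s2: "R \<union> {(u,v),(v,u)} = insert (u,v) (insert (v,u) R)" by auto
    have s3: "R \<union> {(u,v)} \<union> {} = insert (u,v) R" by auto
    have s4: "R \<union> {} \<union> {(v,u)} = insert (v,u) R" by auto
    have s5: "R \<union> {} \<union> {} = R" "R \<union> {} = R" by auto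
    have sw: "Und p s T G (insert (u,v) R) + Und p s T G (insert (v,u) R) = Und p s T G (insert (u,v) (insert (v,u) R)) + Und p s T G R"
      by (rule Und_swap)
    define A where "A = Und p s T G (insert (u,v) R)"
    define B where "B = Und p s T G (insert (v,u) R)"
    define C where "C = Und p s T G (insert (u,v) (insert (v,u) R))"
    define D where "D = Und p s T G R"
    have sw': "A + B = C + D" using sw unfolding A_def B_def C_def D_def .
    have "(\<Sum>a\<in>UNIV. \<Sum>b\<in>UNIV. wt p a * wt p b * Und p s T G
          (R \<union> (if a then {(u,v)} else {}) \<union> (if b then {(v,u)} else {}))) =
          p * p * C + p * (1 - p) * A + (1 - p) * p * B + (1-p) * (1-p) * D"
      unfolding UNIV_bool wt_def A_def B_def C_def D_def by (simp add: s1 s3 s4 s5) (metis insert_commute)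
    also have "\<dots> = p * C + (1 - p) * D"
    proof -
      have "p * (1 - p) * A + (1 - p) * p * B = p * (1 - p) * (A + B)" by (simp add: algebra_simps)
      also have "\<dots> = p * (1 - p) * (C + D)" using sw' by simp
      finally show ?thesis by (simp add: algebra_simps)
    qed
    also have "\<dots> = (\<Sum>c\<in>UNIV. wt p c * Und p s T G
          (R \<union> (if c then {(u,v),(v,u)} else {})))"
      unfolding UNIV_bool wt_def C_def D_def by (simp add: s5)
    finally show ?thesis .
  qed
  also have "\<dots> = Und p s T (insert e G) R"
  proof -
    have finG: "finite G" using insert.hyps by simp
    have "Und p s T (insert e G) R = (\<Sum>c\<in>UNIV. \<Sum>g\<in>PiE G (\<lambda>_. UNIV).
       W p (insert e G) (g(e:=c)) * Ind s T (R \<union> Su (insert e G) (g(e:=c))))"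
      unfolding Und_def sum_PiE_insert[OF insert.hyps(2)] by simp
    also have "\<dots> = (\<Sum>c\<in>UNIV. wt p c * Und p s T G
          (R \<union> (if c then {(u,v),(v,u)} else {})))"
      unfolding Und_def sum_distrib_left
    proof (intro sum.cong refl)
      fix c g assume g: "g \<in> PiE G (\<lambda>_. UNIV :: bool set)"
      have w: "W p (insert e G) (g(e:=c)) = wt p c * W p G g"
        using W_upd[OF finG insert.hyps(2)] by simp
      have st: "R \<union> Su (insert e G) (g(e:=c)) = R \<union> (if c then {(u,v),(v,u)} else {}) \<union> Su G g"
        unfolding Su_def using insert.hyps(2) e by (auto simp: doubleton_eq_iff insert_commute)
      show "W p (insert e G) (g(e:=c)) * Ind s T (R \<union> Su (insert e G) (g(e:=c))) =
         wt p c * (W p G g * Ind s T (R \<union> (if c then {(u,v),(v,u)} else {}) \<union> Su G g))"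
        unfolding w st by simp
    qed
    finally show ?thesis by simp
  qed
  finally show ?case .
qed


lemma pps: "product_prob_space (\<lambda>_::'i. measure_pmf q)"
  by unfold_locales

lemma singleton_PiE: "x \<in> PiE J (\<lambda>_. UNIV) \<Longrightarrow> {x} = PiE J (\<lambda>i. {x i})"
  by (auto simp: PiE_iff extensional_def fun_eq_iff) (metis)

lemma meas_emb:
  fixes I :: "'i set"
  assumes p: "0 \<le> p" "p \<le> 1" and J: "J \<subseteq> I" "finite J" and X: "X \<subseteq> PiE J (\<lambda>_. UNIV)"
  shows "measure (PiM I (\<lambda>_. measure_pmf (bernoulli_pmf p))) (prod_emb I (\<lambda>_. measure_pmf (bernoulli_pmf p)) J X)
     = (\<Sum>x\<in>X. W p J x)"
proof -
  let ?M = "\<lambda>_::'i. measure_pmf (bernoulli_pmf p)"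
  interpret PI: product_prob_space ?M I by (rule pps)
  interpret PJ: product_prob_space ?M J by (rule pps)
  have finX: "finite X" using X J finite_PiE[of J "\<lambda>_. UNIV :: bool set"] by (auto intro: finite_subset)
  have sing: "{x} \<in> sets (PiM J ?M)" if "x \<in> X" for x
    using singleton_PiE[of x J] that X J by (auto intro!: sets_PiM_I_finite)
  have XS: "X \<in> sets (PiM J ?M)"
  proof -
    have "X = (\<Union>x\<in>X. {x})" by auto
    also have "\<dots> \<in> sets (PiM J ?M)" using finX sing by (intro sets.finite_UN) auto
    finally show ?thesis .
  qed
  have "emeasure (PiM I ?M) (prod_emb I ?M J X) = emeasure (PiM J ?M) X"
    using PI.emeasure_PiM_emb'[OF J XS] .
  then have "measure (PiM I ?M) (prod_emb I ?M J X) = measure (PiM J ?M) X"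
    unfolding measure_def by simp
  also have "\<dots> = (\<Sum>x\<in>X. measure (PiM J ?M) {x})"
    using finX sing by (intro measure_eq_sum_singleton) (auto simp: PJ.P.emeasure_eq_measure)
  also have "\<dots> = (\<Sum>x\<in>X. W p J x)"
  proof (intro sum.cong refl)
    fix x assume x: "x \<in> X"
    have "measure (PiM J ?M) {x} = measure (PiM J ?M) (prod_emb J ?M J (PiE J (\<lambda>i. {x i})))"
      using singleton_PiE[of x J] x X by (subst prod_emb_PiE_same_index) auto
    also have "\<dots> = (\<Prod>i\<in>J. measure (?M i) {x i})"
      using J by (intro PJ.measure_PiM_emb) auto
    also have "\<dots> = W p J x"
      unfolding W_def measure_pmf_single wt_def using p by (intro prod.cong refl) auto
    finally show "measure (PiM J ?M) {x} = W p J x" .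
  qed
  finally show ?thesis .
qed


lemma adj_sym: "adj u v = adj v u"
  unfolding adj_def l1norm_def by (simp add: abs_minus_commute)

lemma adj_neq: "adj u v \<Longrightarrow> u \<noteq> v"
  unfolding adj_def l1norm_def by auto

lemma adj_norm: "adj x z \<Longrightarrow> l1norm z \<le> l1norm x + 1"
proof -
  assume a: "adj x z"
  have "l1norm z \<le> (\<Sum>i\<in>UNIV. \<bar>x i\<bar> + \<bar>x i - z i\<bar>)"
    unfolding l1norm_def by (intro sum_mono) auto
  also have "\<dots> = l1norm x + 1" using a unfolding adj_def l1norm_def by (simp add: sum.distrib)
  finally show ?thesis .
qed

lemma comp_le_norm: "\<bar>x i\<bar> \<le> l1norm (x :: 'd::finite \<Rightarrow> int)"
  unfolding l1norm_def by (rule member_le_sum) auto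

lemma finite_ball: "finite (ball_l1 m :: ('d::finite \<Rightarrow> int) set)"
proof -
  have "ball_l1 m \<subseteq> PiE (UNIV :: 'd set) (\<lambda>_. {- int m..int m})"
  proof
    fix x :: "'d \<Rightarrow> int" assume "x \<in> ball_l1 m"
    then have "l1norm x \<le> int m" unfolding ball_l1_def by simp
    then have "\<bar>x i\<bar> \<le> int m" for i using comp_le_norm[of x i] by linarith
    then show "x \<in> PiE (UNIV :: 'd set) (\<lambda>_. {- int m..int m})"
      by (auto simp: PiE_iff abs_le_iff) (smt (verit))
  qed
  moreover have "finite (PiE (UNIV :: 'd set) (\<lambda>_. {- int m..int m}))"
    by (intro finite_PiE) auto
  ultimately show ?thesis by (rule finite_subset)
qed

lemma origin_ball: "origin \<in> ball_l1 m"
  unfolding origin_def ball_l1_def l1norm_def by simp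

lemma reach_restrict:
  fixes E :: "('d::finite \<Rightarrow> int) \<Rightarrow> ('d \<Rightarrow> int) \<Rightarrow> bool"
  shows "(\<exists>x\<in>bdry n. (\<lambda>u v. adj u v \<and> E u v)\<^sup>*\<^sup>* origin x) \<longleftrightarrow>
     (\<exists>x\<in>bdry n. (origin, x) \<in> {(u,v). adj u v \<and> u \<in> ball_l1 (Suc n) \<and> v \<in> ball_l1 (Suc n) \<and> E u v}\<^sup>*)"
    (is "?L \<longleftrightarrow> ?R")
proof
  let ?S = "{(u,v). adj u v \<and> u \<in> ball_l1 (Suc n) \<and> v \<in> ball_l1 (Suc n) \<and> E u v}"
  assume ?L
  then obtain x where x: "x \<in> bdry n" "(\<lambda>u v. adj u v \<and> E u v)\<^sup>*\<^sup>* origin x" by blast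
  have "(y \<in> ball_l1 n \<and> (origin, y) \<in> ?S\<^sup>*) \<or> (\<exists>z\<in>bdry n. (origin, z) \<in> ?S\<^sup>*)"
    if "(\<lambda>u v. adj u v \<and> E u v)\<^sup>*\<^sup>* origin y" for y
    using that
  proof (induction rule: rtranclp_induct)
    case base
    then show ?case using origin_ball by auto
  next
    case (step y z)
    show ?case
    proof (cases "y \<in> ball_l1 n \<and> (origin, y) \<in> ?S\<^sup>*")
      case True
      have nz: "l1norm z \<le> l1norm y + 1" using step.hyps(2) adj_norm by blast
      have yz: "(y, z) \<in> ?S" using True nz step.hyps(2) unfolding ball_l1_def by auto
      then have oz: "(origin, z) \<in> ?S\<^sup>*" using True by (meson rtrancl.simps)
      show ?thesis
      proof (cases "z \<in> ball_l1 n")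
        case True then show ?thesis using oz by blast
      next
        case False
        then have "z \<in> bdry n" using yz unfolding bdry_def by auto
        then show ?thesis using oz by blast
      qed
    next
      case False then show ?thesis using step.IH by blast
    qed
  qed
  then show ?R using x unfolding bdry_def by blast
next
  assume ?R
  then obtain x where x: "x \<in> bdry n" "(origin, x) \<in> {(u,v). adj u v \<and> u \<in> ball_l1 (Suc n) \<and> v \<in> ball_l1 (Suc n) \<and> E u v}\<^sup>*" by blast
  have "(\<lambda>u v. adj u v \<and> E u v)\<^sup>*\<^sup>* a b" if "(a, b) \<in> {(u,v). adj u v \<and> u \<in> ball_l1 (Suc n) \<and> v \<in> ball_l1 (Suc n) \<and> E u v}\<^sup>*" for a b
    using that
  proof (induction rule: rtrancl_induct)
    case base then show ?case by simp
  next
    case (step y z) then show ?case by (auto intro: rtranclp.rtrancl_into_rtrancl)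
  qed
  then show ?L using x by blast
qed

theorem lemma3p4:
  fixes p :: real and n :: nat
  assumes "0 < p" and "p < 1"
  shows "measure (dir_perc p :: ((('d::finite \<Rightarrow> int) \<times> ('d \<Rightarrow> int)) \<Rightarrow> bool) measure)
           (dir_reach_event n \<inter> space (dir_perc p))
       = measure (undir_perc p :: (('d \<Rightarrow> int) set \<Rightarrow> bool) measure)
           (undir_reach_event n \<inter> space (undir_perc p))"
proof -
  let ?M = "\<lambda>_. measure_pmf (bernoulli_pmf p)"
  define V where "V = (ball_l1 (Suc n) :: ('d \<Rightarrow> int) set)"
  define Df where "Df = {(u,v). adj u v \<and> u \<in> V \<and> v \<in> V}"
  define Gf where "Gf = {{u,v} | u v. adj u v \<and> u \<in> V \<and> v \<in> V}"
  have finV: "finite V" unfolding V_def by (rule finite_ball)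
  have Gf2: "\<forall>e\<in>Gf. card e = 2" unfolding Gf_def using adj_neq by (auto simp: card_2_iff) blast
  have finDf: "finite Df"
  proof (rule finite_subset)
    show "Df \<subseteq> V \<times> V" unfolding Df_def by auto
  qed (use finV in auto)
  have finGf: "finite Gf"
  proof -
    have "Gf = (\<lambda>(u,v). {u,v}) ` Df" unfolding Gf_def Df_def by auto
    then show ?thesis using finDf by simp
  qed
  have FG: "Fset Gf = Df"
    unfolding Fset_def Gf_def Df_def
    using adj_neq by (auto simp: doubleton_eq_iff) (metis adj_sym)+
  have memGf: "(u \<noteq> v \<and> {u,v} \<in> Gf) \<longleftrightarrow> (u,v) \<in> Df" for u v
    using FG unfolding Fset_def by blast
  have DfI: "Df \<subseteq> dir_edges" unfolding Df_def dir_edges_def by auto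
  have GfI: "Gf \<subseteq> undir_edges" unfolding Gf_def undir_edges_def by auto
  define Xd where "Xd = {\<omega> \<in> PiE Df (\<lambda>_. UNIV). \<exists>x\<in>bdry n. (origin, x) \<in> {d. d \<in> Df \<and> \<omega> d}\<^sup>*}"
  define Xu where "Xu = {\<eta> \<in> PiE Gf (\<lambda>_. UNIV). \<exists>x\<in>bdry n. (origin, x) \<in> (Su Gf \<eta>)\<^sup>*}"
  have ev1: "dir_reach_event n \<inter> space (dir_perc p) = prod_emb dir_edges ?M Df Xd"
  proof -
    have "\<omega> \<in> dir_reach_event n \<longleftrightarrow> (\<exists>x\<in>bdry n. (origin, x) \<in> {d. d \<in> Df \<and> \<omega> d}\<^sup>*)" for \<omega>
    proof -
      have "{(u,v). adj u v \<and> u \<in> ball_l1 (Suc n) \<and> v \<in> ball_l1 (Suc n) \<and> \<omega> (u,v)} = {d. d \<in> Df \<and> \<omega> d}"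
        unfolding Df_def V_def by auto
      then show ?thesis unfolding dir_reach_event_def
        using reach_restrict[of n "\<lambda>u v. \<omega> (u,v)"] by simp
    qed
    moreover have "{d. d \<in> Df \<and> restrict \<omega> Df d} = {d. d \<in> Df \<and> \<omega> d}" for \<omega> :: "('d \<Rightarrow> int) \<times> ('d \<Rightarrow> int) \<Rightarrow> bool"
      by auto
    ultimately show ?thesis
      unfolding prod_emb_def dir_perc_def Xd_def space_PiM by auto
  qed
  have ev2: "undir_reach_event n \<inter> space (undir_perc p) = prod_emb undir_edges ?M Gf Xu"
  proof -
    have "\<eta> \<in> undir_reach_event n \<longleftrightarrow> (\<exists>x\<in>bdry n. (origin, x) \<in> (Su Gf \<eta>)\<^sup>*)" for \<eta>
    proof -
      have "{(u,v). adj u v \<and> u \<in> ball_l1 (Suc n) \<and> v \<in> ball_l1 (Suc n) \<and> \<eta> {u,v}} = Su Gf \<eta>"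
        unfolding Su_def using memGf unfolding Df_def V_def by auto
      then show ?thesis unfolding undir_reach_event_def
        using reach_restrict[of n "\<lambda>u v. \<eta> {u,v}"] by simp
    qed
    moreover have "Su Gf (restrict \<eta> Gf) = Su Gf \<eta>" for \<eta> :: "('d \<Rightarrow> int) set \<Rightarrow> bool"
      unfolding Su_def by auto
    ultimately show ?thesis
      unfolding prod_emb_def undir_perc_def Xu_def space_PiM by auto
  qed
  have p01: "0 \<le> p" "p \<le> 1" using assms by auto
  have "measure (dir_perc p :: ((('d::finite \<Rightarrow> int) \<times> ('d \<Rightarrow> int)) \<Rightarrow> bool) measure)
           (dir_reach_event n \<inter> space (dir_perc p)) = (\<Sum>x\<in>Xd. W p Df x)"
    unfolding ev1 unfolding dir_perc_def
    by (rule meas_emb[OF p01 DfI finDf]) (auto simp: Xd_def)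
  also have "\<dots> = Dir p origin (bdry n) Gf {}"
    unfolding Dir_def FG Xd_def Ind_def
    using finDf by (simp add: sum.inter_filter[symmetric] finite_PiE) (simp add: Int_def)
  also have "\<dots> = Und p origin (bdry n) Gf {}"
    by (rule core[OF finGf Gf2])
  also have "\<dots> = (\<Sum>x\<in>Xu. W p Gf x)"
    unfolding Und_def Xu_def Ind_def
    using finGf by (simp add: sum.inter_filter[symmetric] finite_PiE) (simp add: Int_def)
  also have "\<dots> = measure (undir_perc p :: (('d \<Rightarrow> int) set \<Rightarrow> bool) measure)
           (undir_reach_event n \<inter> space (undir_perc p))"
    unfolding ev2 unfolding undir_perc_def
    by (rule meas_emb[OF p01 GfI finGf, symmetric]) (auto simp: Xu_def)
  finally show ?thesis .
qed

end
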